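(* Let $\alpha\in\mathbb{R}$, let $\mathbb{Q}[x]^+_{x=\alpha}=\{p\in\mathbb{Q}[x]: p(\alpha)>0\}$, and suppose $\mathbb{Q}[x]^+_{x=\alpha}=H_1\sqcup H_2$ with $H_1,H_2$ disjoint nonempty subsets, each closed under addition and multiplication. Then: (i) for every integer $i\ge 2$, at least one of $H_1,H_2$ contains both a polynomial of degree $i$ with positive leading coefficient and a polynomial of degree $i$ with negative leading coefficient; (ii) for every integer $N\ge1$ and $j=1,2$, $H_j$ contains a polynomial of degree exactly $N$. *)

theory Defs
  imports "HOL-Computational_Algebra.Polynomial" Complex_Main
begin

definition pos_at :: "real \<Rightarrow> rat poly set" where
  "pos_at \<alpha> = {p. poly (map_poly of_rat p) \<alpha> > 0}"

definition add_mult_closed :: "rat poly set \<Rightarrow> bool" where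
  "add_mult_closed H \<longleftrightarrow> (\<forall>p\<in>H. \<forall>q\<in>H. p + q \<in> H \<and> p * q \<in> H)"

end

theory Submission
  imports Defs
begin
lemma mp_add: "map_poly (of_rat::rat\<Rightarrow>real) (p+q) = map_poly of_rat p + map_poly of_rat q"
  by (intro poly_eqI) (simp add: coeff_map_poly of_rat_add)
lemma mp_smult: "map_poly (of_rat::rat\<Rightarrow>real) (smult c p) = smult (of_rat c) (map_poly of_rat p)"
  by (simp add: map_poly_smult of_rat_mult)
lemma mp_mult: "map_poly (of_rat::rat\<Rightarrow>real) (p*q) = map_poly of_rat p * map_poly of_rat q"
  by (induction p) (simp_all add: map_poly_pCons mp_add mp_smult)
lemma mp_const: "map_poly (of_rat::rat\<Rightarrow>real) [:c:] = [:of_rat c:]"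
  by (simp add: map_poly_pCons)
lemma mp_diff: "map_poly (of_rat::rat\<Rightarrow>real) (p-q) = map_poly of_rat p - map_poly of_rat q"
  by (intro poly_eqI) (simp add: coeff_map_poly of_rat_diff)
lemma mp_monom: "map_poly (of_rat::rat\<Rightarrow>real) (monom c n) = monom (of_rat c) n"
  by (simp add: map_poly_monom)
lemma mp_lin: "map_poly (of_rat::rat\<Rightarrow>real) [:c, d:] = [:of_rat c, of_rat d:]"
  by (simp add: map_poly_pCons)

lemmas ev_simps = mp_add mp_smult mp_mult mp_const mp_diff mp_monom mp_lin poly_monom

lemma rat_between: "(x::real) < y \<Longrightarrow> \<exists>s::rat. x < of_rat s \<and> of_rat s < y"
  by (metis Rats_cases Rats_dense_in_real)

lemma pos_at_iff: "p \<in> pos_at a \<longleftrightarrow> poly (map_poly of_rat p) a > 0"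
  by (simp add: pos_at_def)

lemma cm_deg:
  assumes "m \<ge> 1" "c \<noteq> 0"
  shows "degree ([:K:] + monom c m) = m" "lead_coeff ([:K:] + monom c m) = c"
proof -
  have d: "degree ([:K:] + monom c m) = m"
    using assms by (subst degree_add_eq_right) (auto simp: degree_monom_eq)
  show "degree ([:K:] + monom c m) = m" by (rule d)
  show "lead_coeff ([:K:] + monom c m) = c" unfolding d using assms by (cases m) simp_all
qed

lemma cm_pos: "\<exists>K::rat. [:K:] + monom c m \<in> pos_at a"
proof -
  obtain K :: rat where K: "\<bar>of_rat c\<bar> * \<bar>a\<bar>^m < of_rat K"
    using rat_between[of "\<bar>of_rat c\<bar> * \<bar>a\<bar>^m" "\<bar>of_rat c\<bar> * \<bar>a\<bar>^m + 1"] by auto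
  have "\<bar>of_rat c * a ^ m\<bar> = \<bar>of_rat c\<bar> * \<bar>a\<bar>^m" by (simp add: abs_mult power_abs)
  then have "of_rat K + of_rat c * a ^ m > 0" using K by linarith
  then show ?thesis by (auto simp: pos_at_iff ev_simps)
qed

lemma pow_closed:
  assumes "add_mult_closed H" "p \<in> H" shows "p ^ Suc n \<in> H"
  using assms by (induction n) (auto simp: add_mult_closed_def)

lemma split_lemma:
  assumes cl: "add_mult_closed H" and N: "N \<ge> 1"
    and all: "\<And>p. p \<in> pos_at a \<Longrightarrow> degree p = N \<Longrightarrow> p \<in> H"
    and t: "t \<in> pos_at a" "degree t \<le> N"
  shows "t \<in> H"
proof (cases "degree t = N")
  case True then show ?thesis using all t by auto
next
  case False
  then have lt: "degree t < N" using t by auto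
  define T where "T = poly (map_poly of_rat t) a"
  have T: "T > 0" using t by (simp add: pos_at_iff T_def)
  obtain c :: rat where c: "a^N - T/2 < of_rat c" "of_rat c < a^N + T/2"
    using rat_between[of "a^N - T/2" "a^N + T/2"] T by auto
  define s1 where "s1 = monom 1 N + (smult (1/2) t - [:c:])"
  define s2 where "s2 = monom (-1) N + (smult (1/2) t + [:c:])"
  have dl1: "degree (smult (1/2) t - [:c:]) < N"
    using lt N degree_diff_le_max[of "smult (1/2) t" "[:c:]"] by auto
  have dl2: "degree (smult (1/2) t + [:c:]) < N"
    using lt N degree_add_le_max[of "smult (1/2) t" "[:c:]"] by auto
  have d1: "degree s1 = N" unfolding s1_def using dl1
    by (subst degree_add_eq_left) (auto simp: degree_monom_eq)
  have d2: "degree s2 = N" unfolding s2_def using dl2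
    by (subst degree_add_eq_left) (auto simp: degree_monom_eq)
  have p1: "s1 \<in> pos_at a" using c unfolding s1_def pos_at_iff
    by (simp add: ev_simps T_def[symmetric] of_rat_divide)
  have p2: "s2 \<in> pos_at a" using c unfolding s2_def pos_at_iff
    by (simp add: ev_simps T_def[symmetric] of_rat_divide of_rat_minus)
  have h: "smult (1/2) t + smult (1/2) t = t"
    by (simp add: smult_add_left[symmetric])
  have "s1 + s2 = (monom 1 N + monom (-1) N) + (smult (1/2) t + smult (1/2) t)" unfolding s1_def s2_def
    by (simp add: algebra_simps)
  then have "s1 + s2 = t" using h by (simp add: add_monom)
  moreover have "s1 + s2 \<in> H" using all p1 p2 d1 d2 cl by (auto simp: add_mult_closed_def)
  ultimately show ?thesis by simp
qed

lemma low_gen: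
  assumes cl: "add_mult_closed H"
    and low: "\<And>p. p \<in> pos_at a \<Longrightarrow> degree p \<le> 1 \<Longrightarrow> p \<in> H"
  shows "t \<in> pos_at a \<Longrightarrow> t \<in> H"
proof (induction "degree t" arbitrary: t rule: less_induct)
  case less
  show ?case
  proof (cases "degree t \<le> 1")
    case True then show ?thesis using low less by auto
  next
    case False
    obtain r :: rat where r: "a - 1 < of_rat r" "of_rat r < a"
      using rat_between[of "a - 1" a] by auto
    define l where "l = [:-r, 1:]"
    define c where "c = poly t r"
    have "poly (t - [:c:]) r = 0" by (simp add: c_def)
    then have "[:-r, 1:] dvd (t - [:c:])" using dvd_iff_poly_eq_0[of "-r" "t - [:c:]"] by simp
    then obtain q where q: "t - [:c:] = l * q" unfolding l_def by (auto elim: dvdE)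
    then have tq: "t = l * q + [:c:]" by (simp add: algebra_simps)
    have qnz: "q \<noteq> 0" using False tq by auto
    have dl: "degree (l * q) = Suc (degree q)" 
    using degree_mult_eq[of l q] qnz by (simp add: l_def)
    have "degree t = degree (l * q)" unfolding tq using dl by (subst degree_add_eq_left) auto
    then have dq: "degree t = Suc (degree q)" "degree q \<ge> 1" using dl False by auto
    define L where "L = a - of_rat r"
    define Q where "Q = poly (map_poly of_rat q) a"
    have L: "L > 0" using r by (simp add: L_def)
    have ev_l: "poly (map_poly of_rat l) a = L" by (simp add: l_def ev_simps L_def of_rat_minus)
    have "poly (map_poly of_rat t) a = L * Q + of_rat c"
      by (subst tq) (simp add: ev_simps ev_l Q_def)
    then have pos: "L * Q + of_rat c > 0" using less.prems by (simp add: pos_at_iff)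
    have "- Q < of_rat c / L" using pos L by (simp add: field_simps)
    then obtain K :: rat where K: "- Q < of_rat K" "of_rat K < of_rat c / L"
      using rat_between by blast
    define f1 where "f1 = q + [:K:]"
    define f2 where "f2 = [:c:] - smult K l"
    have df1: "degree f1 = degree q" unfolding f1_def using dq by (subst degree_add_eq_left) auto
    have f1p: "f1 \<in> pos_at a" using K by (simp add: f1_def pos_at_iff ev_simps Q_def)
    have f1H: "f1 \<in> H" using less.hyps[of f1] df1 dq f1p by auto
    have lH: "l \<in> H" using low[of l] L ev_l by (simp add: pos_at_iff l_def)
    have "of_rat K * L < of_rat c" using K L by (simp add: field_simps)
    then have f2p: "f2 \<in> pos_at a" by (simp add: f2_def pos_at_iff ev_simps ev_l)
    have "degree f2 \<le> 1" unfolding f2_def l_def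
      using degree_diff_le_max[of "[:c:]" "smult K [:-r, 1:]"] by auto
    then have f2H: "f2 \<in> H" using low f2p by auto
    have "t = l * f1 + f2" unfolding tq f1_def f2_def
      by (simp add: algebra_simps)
    then show ?thesis using f1H f2H lH cl by (simp add: add_mult_closed_def)
  qed
qed

lemma all_in:
  assumes cl: "add_mult_closed H" and N: "N \<ge> 1"
    and all: "\<And>p. p \<in> pos_at a \<Longrightarrow> degree p = N \<Longrightarrow> p \<in> H"
  shows "pos_at a \<subseteq> H"
proof
  fix t assume "t \<in> pos_at a"
  show "t \<in> H"
  proof (rule low_gen[OF cl _ \<open>t \<in> pos_at a\<close>])
    fix p assume "p \<in> pos_at a" "degree p \<le> 1"
    then show "p \<in> H" using split_lemma[OF cl N all] N by auto
  qed
qed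

lemma sign_lemma:
  assumes P: "pos_at a = A \<union> B" and dis: "A \<inter> B = {}"
    and clA: "add_mult_closed A" and clB: "add_mult_closed B"
    and i: "i \<ge> 2"
    and sA: "\<And>p. p \<in> A \<Longrightarrow> degree p = i \<Longrightarrow> lead_coeff p > 0"
    and sB: "\<And>p. p \<in> B \<Longrightarrow> degree p = i \<Longrightarrow> lead_coeff p < 0"
  shows False
proof -
  obtain K1 where K1: "[:K1:] + monom 1 1 \<in> pos_at a" using cm_pos by blast
  obtain K2 where K2: "[:K2:] + monom (-1) 1 \<in> pos_at a" using cm_pos by blast
  define l1 where "l1 = [:K1:] + monom (1::rat) 1"
  define l2 where "l2 = [:K2:] + monom (-1::rat) 1"
  have d1: "degree l1 = 1" "lead_coeff l1 = 1" unfolding l1_def using cm_deg[where m=1 and c=1 and K=K1] by auto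
  have d2: "degree l2 = 1" "lead_coeff l2 = -1" unfolding l2_def using cm_deg[where m=1 and c="-1" and K=K2] by auto
  have nz1: "l1 \<noteq> 0" using d1 by auto
  have nz2: "l2 \<noteq> 0" using d2 by auto
  have ip: "i = Suc (i - 1)" using i by simp
  have pw: "\<And>l H. add_mult_closed H \<Longrightarrow> l \<in> H \<Longrightarrow> l ^ i \<in> H"
    using pow_closed ip by metis
  have pa: "\<And>p q. p \<in> pos_at a \<Longrightarrow> q \<in> pos_at a \<Longrightarrow> p * q \<in> pos_at a"
    by (simp add: pos_at_iff ev_simps)
  have l1A: "l1 \<in> A"
  proof (rule ccontr)
    assume "l1 \<notin> A"
    then have "l1 \<in> B" using K1 P l1_def by auto
    then have "l1 ^ i \<in> B" using pw clB by auto
    moreover have "degree (l1 ^ i) = i" using d1 by (simp add: degree_power_eq nz1)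
    moreover have "lead_coeff (l1 ^ i) = 1" using d1(2) by (simp only: lead_coeff_power) simp
    ultimately show False using sB by fastforce
  qed
  show False
  proof (cases "even i")
    case True
    have l2A: "l2 \<in> A"
    proof (rule ccontr)
      assume "l2 \<notin> A"
      then have "l2 \<in> B" using K2 P l2_def by auto
      then have "l2 ^ i \<in> B" using pw clB by auto
      moreover have "degree (l2 ^ i) = i" using d2 by (simp add: degree_power_eq nz2)
      moreover have "lead_coeff (l2 ^ i) = 1" using d2(2) True by (simp only: lead_coeff_power) simp
      ultimately show False using sB by fastforce
    qed
    have "l1 ^ (i - 1) \<in> A" using pow_closed[OF clA l1A, of "i - 2"] i
      by (metis Suc_diff_Suc Suc_1 Suc_le_lessD)
    then have "l1 ^ (i - 1) * l2 \<in> A" using l2A clA by (auto simp: add_mult_closed_def)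
    moreover have "degree (l1 ^ (i - 1) * l2) = i"
      using d1 d2 i nz1 nz2 by (simp add: degree_mult_eq degree_power_eq)
    moreover have "lead_coeff (l1 ^ (i - 1) * l2) = -1"
      using d1(2) d2(2) by (simp only: lead_coeff_mult lead_coeff_power) simp
    ultimately show False using sA by fastforce
  next
    case False
    have l2B: "l2 \<in> B"
    proof (rule ccontr)
      assume "l2 \<notin> B"
      then have "l2 \<in> A" using K2 P l2_def by auto
      then have "l2 ^ i \<in> A" using pw clA by auto
      moreover have "degree (l2 ^ i) = i" using d2 by (simp add: degree_power_eq nz2)
      moreover have "lead_coeff (l2 ^ i) = -1" using d2(2) False by (simp only: lead_coeff_power) simp
      ultimately show False using sA by fastforce
    qed
    obtain K3 where K3: "[:K3:] + monom (-1) (i - 1) \<in> pos_at a" using cm_pos by blast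
    define q where "q = [:K3:] + monom (-1::rat) (i - 1)"
    have dq: "degree q = i - 1" "lead_coeff q = -1" unfolding q_def using cm_deg[where m="i - 1" and c="-1" and K=K3] i by auto
    have nzq: "q \<noteq> 0" using dq by auto
    have "q \<in> A \<or> q \<in> B" using K3 P q_def by auto
    then show False
    proof
      assume "q \<in> A"
      then have "q * l1 \<in> A" using l1A clA by (auto simp: add_mult_closed_def)
      moreover have "degree (q * l1) = i"
        using d1 dq i nz1 nzq by (simp add: degree_mult_eq)
      moreover have "lead_coeff (q * l1) = -1"
        using d1(2) dq(2) by (simp only: lead_coeff_mult)
      ultimately show False using sA by fastforce
    next
      assume "q \<in> B"
      then have "q * l2 \<in> B" using l2B clB by (auto simp: add_mult_closed_def)
      moreover have "degree (q * l2) = i"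
        using d2 dq i nz2 nzq by (simp add: degree_mult_eq)
      moreover have "lead_coeff (q * l2) = 1"
        using d2(2) dq(2) by (simp add: lead_coeff_mult)
      ultimately show False using sB by fastforce
    qed
  qed
qed

theorem lemma4p4:
  fixes \<alpha> :: real and H1 H2 :: "rat poly set"
  assumes "pos_at \<alpha> = H1 \<union> H2"
    and "H1 \<inter> H2 = {}"
    and "H1 \<noteq> {}" and "H2 \<noteq> {}"
    and "add_mult_closed H1" and "add_mult_closed H2"
  shows "(\<forall>i::nat. i \<ge> 2 \<longrightarrow>
            (\<exists>H \<in> {H1, H2}. (\<exists>p\<in>H. degree p = i \<and> lead_coeff p > 0)
                          \<and> (\<exists>q\<in>H. degree q = i \<and> lead_coeff q < 0)))
       \<and> (\<forall>N::nat. N \<ge> 1 \<longrightarrow> (\<exists>p\<in>H1. degree p = N) \<and> (\<exists>p\<in>H2. degree p = N))"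
proof (intro conjI allI impI)
  fix N :: nat assume N: "N \<ge> 1"
  show "\<exists>p\<in>H1. degree p = N"
  proof (rule ccontr)
    assume "\<not> ?thesis"
    then have "\<And>p. p \<in> pos_at \<alpha> \<Longrightarrow> degree p = N \<Longrightarrow> p \<in> H2" using assms(1) by auto
    then have "pos_at \<alpha> \<subseteq> H2" using all_in[OF assms(6) N] by blast
    then show False using assms(1,2,3) by auto
  qed
  show "\<exists>p\<in>H2. degree p = N"
  proof (rule ccontr)
    assume "\<not> ?thesis"
    then have "\<And>p. p \<in> pos_at \<alpha> \<Longrightarrow> degree p = N \<Longrightarrow> p \<in> H1" using assms(1) by auto
    then have "pos_at \<alpha> \<subseteq> H1" using all_in[OF assms(5) N] by blast
    then show False using assms(1,2,4) by auto
  qed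
next
  fix i :: nat assume i: "i \<ge> 2"
  show "\<exists>H \<in> {H1, H2}. (\<exists>p\<in>H. degree p = i \<and> lead_coeff p > 0)
                          \<and> (\<exists>q\<in>H. degree q = i \<and> lead_coeff q < 0)"
  proof (rule ccontr)
    assume na: "\<not> ?thesis"
    have lnz: "\<And>p::rat poly. degree p = i \<Longrightarrow> lead_coeff p \<noteq> 0" using i by auto
    have c1: "(\<forall>p\<in>H1. degree p = i \<longrightarrow> lead_coeff p > 0) \<or> (\<forall>p\<in>H1. degree p = i \<longrightarrow> lead_coeff p < 0)"
      using na lnz by (metis insertI1 linorder_neqE_linordered_idom)
    have c2: "(\<forall>p\<in>H2. degree p = i \<longrightarrow> lead_coeff p > 0) \<or> (\<forall>p\<in>H2. degree p = i \<longrightarrow> lead_coeff p < 0)"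
      using na lnz by (metis insertI1 insertI2 linorder_neqE_linordered_idom)
    obtain Kp where Kp: "[:Kp:] + monom 1 i \<in> pos_at \<alpha>" using cm_pos by blast
    obtain Kn where Kn: "[:Kn:] + monom (-1) i \<in> pos_at \<alpha>" using cm_pos by blast
    have dp: "degree ([:Kp:] + monom (1::rat) i) = i" "lead_coeff ([:Kp:] + monom (1::rat) i) = 1"
      using cm_deg[where m=i and c=1 and K=Kp] i by auto
    have dn: "degree ([:Kn:] + monom (-1::rat) i) = i" "lead_coeff ([:Kn:] + monom (-1::rat) i) = -1"
      using cm_deg[where m=i and c="-1" and K=Kn] i by auto
    from c1 c2 show False
    proof (elim disjE)
      assume "\<forall>p\<in>H1. degree p = i \<longrightarrow> lead_coeff p > 0" "\<forall>p\<in>H2. degree p = i \<longrightarrow> lead_coeff p > 0"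
      then show False using Kn dn assms(1) by fastforce
    next
      assume "\<forall>p\<in>H1. degree p = i \<longrightarrow> lead_coeff p < 0" "\<forall>p\<in>H2. degree p = i \<longrightarrow> lead_coeff p < 0"
      then show False using Kp dp assms(1) by fastforce
    next
      assume "\<forall>p\<in>H1. degree p = i \<longrightarrow> lead_coeff p > 0" "\<forall>p\<in>H2. degree p = i \<longrightarrow> lead_coeff p < 0"
      then show False using sign_lemma[OF assms(1,2,5,6) i] by blast
    next
      assume "\<forall>p\<in>H1. degree p = i \<longrightarrow> lead_coeff p < 0" "\<forall>p\<in>H2. degree p = i \<longrightarrow> lead_coeff p > 0"
      moreover have "pos_at \<alpha> = H2 \<union> H1" "H2 \<inter> H1 = {}" using assms(1,2) by auto
      ultimately show False using sign_lemma[of \<alpha> H2 H1 i, OF _ _ assms(6,5) i] by blast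
    qed
  qed
qed
end
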